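(* Let $N, N_{\tilde y}, M, p \in \mathbb{N}$ with $p\le N$, $X\in\mathbb{R}^{N\times M}$, $\tilde Y \in \mathbb{R}^{N_{\tilde y}\times M}$, $\lambda\ge0$, $\Omega=\{1,\dots,N\}$. Let $\tilde Y = U\Sigma V$ be a singular value decomposition ($U,V$ orthogonal, $\Sigma$ with diagonal entries $\sigma_1(\tilde Y)\ge\sigma_2(\tilde Y)\ge\cdots$), and for $r\le\operatorname{rank}\tilde Y$ let $Z = \Sigma_{1:r,1:r}V_{1:r}$ ($V_{1:r}$ = first $r$ rows of $V$). Let $\bar S^{\mathrm r}_0=\emptyset$ and for $k\ge1$, $\bar s^{\mathrm r}_k \in \arg\max_{i\in\mathcal{F}(\bar S^{\mathrm r}_{k-1})} \{J_Z(\bar S^{\mathrm r}_{k-1}\cup\{i\}) - J_Z(\bar S^{\mathrm r}_{k-1})\}$, $\bar S^{\mathrm r}_k=\bar S^{\mathrm r}_{k-1}\cup\{\bar s^{\mathrm r}_k\}$, and let $\bar s^{\mathrm r,2}_k \in \arg\max_{i\in\mathcal{F}(\bar S^{\mathrm r}_{k-1})\setminus\{\bar s^{\mathrm r}_k\}}\{J_Z(\bar S^{\mathrm r}_{k-1}\cup\{i\}) - J_Z(\bar S^{\mathrm r}_{k-1})\}$ (the second-best element). Similarly let $\bar S^{\mathrm o}_0=\emptyset$, $\bar s^{\mathrm o}_k\in\arg\max_{i\in\mathcal{F}(\bar S^{\mathrm o}_{k-1})}\{J_{\tilde Y}(\bar S^{\mathrm o}_{k-1}\cup\{i\}) - J_{\tilde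 Y}(\bar S^{\mathrm o}_{k-1})\}$, $\bar S^{\mathrm o}_k = \bar S^{\mathrm o}_{k-1}\cup\{\bar s^{\mathrm o}_k\}$. If there is $k'\in\{1,\dots,p\}$ such that for every $k\in\{1,\dots,k'\}$ \[ J_Z(\bar S^{\mathrm r}_k) - J_Z(\bar S^{\mathrm r}_{k-1}\cup\{\bar s^{\mathrm r,2}_k\}) > \sum_{i=r+1}^{\operatorname{rank}\tilde Y}\sigma_i^2(\tilde Y), \] then $\bar S^{\mathrm r}_{k'} = \bar S^{\mathrm o}_{k'}$.
   Context: For a matrix $Y$ with $M$ columns and $S\subset\Omega$ with $X_SX_S^\top+\lambda I_{|S|}\succ0$, $J_Y(S) = \operatorname{tr}\{ Y X_S^\top (X_S X_S^\top + \lambda I_{|S|})^{-1} X_S Y^\top \}$, where $X_S$ is the submatrix of rows of $X$ indexed by $S$; $J_Y(\emptyset)=0$. For $S\subset\Omega$, the feasible set is $\mathcal{F}(S) = \{ i\in\Omega\setminus S : X_{S'}X_{S'}^\top + \lambda I_{|S'|}\succ0,\ S'=S\cup\{i\}\}$; the greedy sequences are assumed well defined (the relevant feasible sets nonempty, with at least two elements for defining $\bar s^{\mathrm r,2}_k$). *)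

theory Defs
  imports Jordan_Normal_Form.Gauss_Jordan_Elimination Jordan_Normal_Form.DL_Rank
    Jordan_Normal_Form.DL_Submatrix
begin

(* Row indices are 0-based: Omega = {0..<N} corresponds to {1,...,N} in the paper. *)

definition mtrace :: "real mat \<Rightarrow> real" where
  "mtrace A = (\<Sum>i<dim_row A. A $$ (i,i))"

definition pos_def_mat :: "nat \<Rightarrow> real mat \<Rightarrow> bool" where
  "pos_def_mat n A \<longleftrightarrow> A \<in> carrier_mat n n \<and> transpose_mat A = A \<and>
     (\<forall>v \<in> carrier_vec n. v \<noteq> 0\<^sub>v n \<longrightarrow> v \<bullet> (A *\<^sub>v v) > 0)"

definition rows_sub :: "real mat \<Rightarrow> nat set \<Rightarrow> real mat" where
  "rows_sub X S = submatrix X S {0..<dim_col X}"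

definition gram_reg :: "real mat \<Rightarrow> real \<Rightarrow> nat set \<Rightarrow> real mat" where
  "gram_reg X lam S = rows_sub X S * transpose_mat (rows_sub X S) + lam \<cdot>\<^sub>m 1\<^sub>m (card S)"

definition Jfun :: "real mat \<Rightarrow> real \<Rightarrow> real mat \<Rightarrow> nat set \<Rightarrow> real" where
  "Jfun X lam Y S = (if S = {} then 0 else
     mtrace (Y * transpose_mat (rows_sub X S) * the (mat_inverse (gram_reg X lam S))
               * rows_sub X S * transpose_mat Y))"

definition feasible :: "real mat \<Rightarrow> real \<Rightarrow> nat set \<Rightarrow> nat set" where
  "feasible X lam S = {i \<in> {0..<dim_row X} - S.
      pos_def_mat (card (insert i S)) (gram_reg X lam (insert i S))}"

definition is_argmax_gain :: "real mat \<Rightarrow> real \<Rightarrow> real mat \<Rightarrow> nat set \<Rightarrow> nat set \<Rightarrow> nat \<Rightarrow> bool" where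
  "is_argmax_gain X lam Y S A s \<longleftrightarrow> s \<in> A \<and>
     (\<forall>i \<in> A. Jfun X lam Y (insert i S) - Jfun X lam Y S \<le> Jfun X lam Y (insert s S) - Jfun X lam Y S)"

end

theory Submission
  imports Defs
begin

lemma entry3:
  fixes Y B :: "real mat"
  assumes Y: "Y \<in> carrier_mat n m" and B: "B \<in> carrier_mat m m" and i: "i < n"
  shows "(Y * B * transpose_mat Y) $$ (i,i) = (\<Sum>a<m. \<Sum>b<m. B $$ (a,b) * (Y $$ (i,a) * Y $$ (i,b)))"
proof -
  have "(Y * B * transpose_mat Y) $$ (i,i) = (\<Sum>a<m. Y $$ (i, a) * (\<Sum>b<m. B $$ (a, b) * Y $$ (i, b)))"
    using Y B i by (simp add: scalar_prod_def atLeast0LessThan)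
  also have "\<dots> = (\<Sum>a<m. \<Sum>b<m. B $$ (a,b) * (Y $$ (i,a) * Y $$ (i,b)))"
    by (rule sum.cong[OF refl], subst sum_distrib_left, rule sum.cong[OF refl], simp)
  finally show ?thesis .
qed

lemma trace_form:
  fixes Y B :: "real mat"
  assumes Y: "Y \<in> carrier_mat n m" and B: "B \<in> carrier_mat m m"
  shows "mtrace (Y * B * transpose_mat Y) = (\<Sum>a<m. \<Sum>b<m. B $$ (a,b) * (transpose_mat Y * Y) $$ (a,b))"
proof -
  have "mtrace (Y * B * transpose_mat Y) = (\<Sum>i<n. \<Sum>a<m. \<Sum>b<m. B $$ (a,b) * (Y $$ (i,a) * Y $$ (i,b)))"
    unfolding mtrace_def using Y B entry3[OF Y B] by simp
  also have "\<dots> = (\<Sum>a<m. \<Sum>i<n. \<Sum>b<m. B $$ (a,b) * (Y $$ (i,a) * Y $$ (i,b)))"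
    by (rule sum.swap)
  also have "\<dots> = (\<Sum>a<m. \<Sum>b<m. \<Sum>i<n. B $$ (a,b) * (Y $$ (i,a) * Y $$ (i,b)))"
    by (rule sum.cong[OF refl], rule sum.swap)
  also have "\<dots> = (\<Sum>a<m. \<Sum>b<m. B $$ (a,b) * (transpose_mat Y * Y) $$ (a,b))"
    using Y by (intro sum.cong refl) (simp add: scalar_prod_def atLeast0LessThan sum_distrib_left)
  finally show ?thesis .
qed

lemma quad_sum:
  fixes B :: "real mat"
  assumes x: "x \<in> carrier_vec m" and B: "B \<in> carrier_mat m m"
  shows "x \<bullet> (B *\<^sub>v x) = (\<Sum>a<m. \<Sum>b<m. B $$ (a,b) * (x $ a * x $ b))"
proof -
  have "x \<bullet> (B *\<^sub>v x) = (\<Sum>a<m. x $ a * (\<Sum>b<m. B $$ (a,b) * x $ b))"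
    using x B by (simp add: scalar_prod_def atLeast0LessThan)
  also have "\<dots> = (\<Sum>a<m. \<Sum>b<m. B $$ (a,b) * (x $ a * x $ b))"
    by (rule sum.cong[OF refl], subst sum_distrib_left, rule sum.cong[OF refl], simp)
  finally show ?thesis .
qed

lemma sp_self_nonneg: fixes v :: "real vec" shows "0 \<le> v \<bullet> v"
  unfolding scalar_prod_def by (intro sum_nonneg) auto

lemma quad_bounds:
  fixes A Gi :: "real mat"
  assumes A: "A \<in> carrier_mat t m" and lam: "lam \<ge> 0" and Gi: "Gi \<in> carrier_mat t t"
    and inv: "(A * transpose_mat A + lam \<cdot>\<^sub>m 1\<^sub>m t) * Gi = 1\<^sub>m t" and x: "x \<in> carrier_vec m"
  shows "0 \<le> x \<bullet> ((transpose_mat A * Gi * A) *\<^sub>v x) \<and> x \<bullet> ((transpose_mat A * Gi * A) *\<^sub>v x) \<le> x \<bullet> x"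
proof -
  define G where "G = A * transpose_mat A + lam \<cdot>\<^sub>m 1\<^sub>m t"
  have At: "transpose_mat A \<in> carrier_mat m t" using A by auto
  have G: "G \<in> carrier_mat t t" unfolding G_def using A by auto
  define y where "y = Gi *\<^sub>v (A *\<^sub>v x)"
  define w where "w = transpose_mat A *\<^sub>v y"
  have y: "y \<in> carrier_vec t" unfolding y_def using Gi A x by auto
  have w: "w \<in> carrier_vec m" unfolding w_def using At y by auto
  have Ax: "A *\<^sub>v x \<in> carrier_vec t" using A x by auto
  have Aw: "A *\<^sub>v w \<in> carrier_vec t" using A w by auto
  have Ax: "A *\<^sub>v x \<in> carrier_vec t" using A x by auto
  have h1: "(transpose_mat A * Gi * A) *\<^sub>v x = w"
  proof -
    have AG: "transpose_mat A * Gi \<in> carrier_mat m t" using At Gi by simp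
    have "(transpose_mat A * Gi * A) *\<^sub>v x = (transpose_mat A * Gi) *\<^sub>v (A *\<^sub>v x)"
      by (rule assoc_mult_mat_vec[OF AG A x])
    also have "\<dots> = transpose_mat A *\<^sub>v (Gi *\<^sub>v (A *\<^sub>v x))"
      by (rule assoc_mult_mat_vec[OF At Gi Ax])
    finally show ?thesis unfolding w_def y_def .
  qed
  have h2: "G *\<^sub>v y = A *\<^sub>v x"
  proof -
    have "G *\<^sub>v y = (G * Gi) *\<^sub>v (A *\<^sub>v x)" unfolding y_def using G Gi Ax by simp
    also have "\<dots> = A *\<^sub>v x" using inv Ax unfolding G_def by simp
    finally show ?thesis .
  qed
  have h4: "G *\<^sub>v y = A *\<^sub>v w + lam \<cdot>\<^sub>v y"
  proof -
    have "G *\<^sub>v y = (A * transpose_mat A) *\<^sub>v y + (lam \<cdot>\<^sub>m 1\<^sub>m t) *\<^sub>v y"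
      unfolding G_def using A y by (simp add: add_mult_distrib_mat_vec[of _ t t])
    also have "(A * transpose_mat A) *\<^sub>v y = A *\<^sub>v w" unfolding w_def using A y by simp
    also have "(lam \<cdot>\<^sub>m 1\<^sub>m t) *\<^sub>v y = lam \<cdot>\<^sub>v y" using y by (intro eq_vecI) (auto simp: scalar_prod_def if_distrib if_distribR sum.delta' cong: if_cong)
    finally show ?thesis .
  qed
  have h3: "x \<bullet> w = (A *\<^sub>v x) \<bullet> y"
  proof -
    have "x \<bullet> w = w \<bullet> x" using x w by (simp add: comm_scalar_prod[of _ m])
    also have "\<dots> = y \<bullet> (A *\<^sub>v x)" unfolding w_def by (rule transpose_vec_mult_scalar[OF A x y])
    also have "\<dots> = (A *\<^sub>v x) \<bullet> y" using y Ax by (simp add: comm_scalar_prod[of _ t])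
    finally show ?thesis .
  qed
  have h5: "w \<bullet> w = (A *\<^sub>v w) \<bullet> y"
  proof -
    have "w \<bullet> w = y \<bullet> (A *\<^sub>v w)" unfolding w_def[symmetric] using transpose_vec_mult_scalar[OF A w y]
      unfolding w_def by simp
    also have "\<dots> = (A *\<^sub>v w) \<bullet> y" using y Aw by (simp add: comm_scalar_prod[of _ t])
    finally show ?thesis .
  qed
  have q: "x \<bullet> w = w \<bullet> w + lam * (y \<bullet> y)"
  proof -
    have "x \<bullet> w = (A *\<^sub>v w + lam \<cdot>\<^sub>v y) \<bullet> y" using h3 h2 h4 by simp
    also have "\<dots> = (A *\<^sub>v w) \<bullet> y + (lam \<cdot>\<^sub>v y) \<bullet> y"
      using Aw y by (simp add: add_scalar_prod_distrib[of _ t])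
    also have "\<dots> = w \<bullet> w + lam * (y \<bullet> y)" using h5 y by simp
    finally show ?thesis .
  qed
  have xw: "(x - w) \<bullet> (x - w) = x \<bullet> x - 2 * (x \<bullet> w) + w \<bullet> w"
  proof -
    have xmw: "x - w \<in> carrier_vec m" using x w by simp
    have "(x - w) \<bullet> (x - w) = x \<bullet> (x - w) - w \<bullet> (x - w)"
      using x w xmw by (simp add: minus_scalar_prod_distrib[of _ m])
    also have "\<dots> = x \<bullet> x - x \<bullet> w - (w \<bullet> x - w \<bullet> w)"
      using x w by (simp add: scalar_prod_minus_distrib[of _ m])
    also have "w \<bullet> x = x \<bullet> w" using x w by (simp add: comm_scalar_prod[of _ m])
    finally show ?thesis by simp
  qed
  have "0 \<le> (x - w) \<bullet> (x - w)" "0 \<le> y \<bullet> y" "0 \<le> w \<bullet> w" by (rule sp_self_nonneg)+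
  moreover have "0 \<le> lam * (y \<bullet> y)" using lam \<open>0 \<le> y \<bullet> y\<close> by simp
  ultimately show ?thesis unfolding h1 using q xw by linarith
qed

lemma mult_unit_vec_col:
  fixes K :: "'a :: field mat"
  assumes K: "K \<in> carrier_mat n k" and a: "a < k"
  shows "K *\<^sub>v unit_vec k a = col K a"
  using K a by (intro eq_vecI) (auto simp: scalar_prod_def unit_vec_def if_distrib if_distribR sum.delta' cong: if_cong)

context vec_space begin

lemma rank_le_nr:
  assumes A: "A \<in> carrier_mat n nc"
  shows "rank A \<le> n"
proof -
  have sub: "VectorSpace.subspace class_ring (span (set (cols A))) V"
    using span_is_subspace assms cols_dim carrier_matD by (metis)
  show ?thesis unfolding rank_def
    using subspace_dim[OF sub fin_dim fin_dim_span_cols[OF A]] dim_is_n by simp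
qed

lemma rank_mult_right:
  assumes A: "A \<in> carrier_mat n nc" and B: "B \<in> carrier_mat nc k"
  shows "rank (A * B) \<le> rank A"
proof -
  define W where "W = span (set (cols A))"
  have AB: "A * B \<in> carrier_mat n k" using A B by simp
  have "set (cols (A * B)) \<subseteq> W"
  proof
    fix x assume "x \<in> set (cols (A * B))"
    then obtain i where i: "i < k" "x = col (A * B) i"
      using AB by (metis cols_length cols_nth in_set_conv_nth carrier_matD(2))
    then have "x = A *\<^sub>v col B i" by (simp only: i(2) col_mult2[OF A B i(1)])
    moreover have "col B i \<in> carrier_vec nc" using B i by auto
    ultimately have "x \<in> col_space A" using col_space_eq[OF A] A by auto
    then show "x \<in> W" unfolding W_def col_space_def .
  qed
  have subW: "VectorSpace.subspace class_ring W V" unfolding W_def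
    using span_is_subspace A cols_dim carrier_matD by metis
  then have "span (set (cols (A * B))) \<subseteq> W"
    by (simp add: \<open>set (cols (A * B)) \<subseteq> W\<close> span_is_subset)
  have "VectorSpace.subspace class_ring (span (set (cols (A * B)))) V"
    using span_is_subspace AB cols_dim carrier_matD by metis
  have subspace: "VectorSpace.subspace class_ring (span (set (cols (A * B)))) (vs W)"
    using nested_subspaces[OF subW \<open>VectorSpace.subspace class_ring (span (set (cols (A * B)))) V\<close>
      \<open>span (set (cols (A * B))) \<subseteq> W\<close>] .
  have fW: "vectorspace.fin_dim class_ring (vs W)"
    unfolding W_def using fin_dim_span_cols[OF A] .
  have "vectorspace.fin_dim class_ring (span_vs (set (cols (A * B))))"
    using fin_dim_span_cols[OF AB] .
  then show ?thesis unfolding rank_def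
    using vectorspace.subspace_dim[OF subspace_is_vs[OF subW] subspace fW] W_def by auto
qed

lemma full_col_rank:
  fixes K :: "'a mat"
  assumes K: "K \<in> carrier_mat n k"
    and inj: "\<And>v. v \<in> carrier_vec k \<Longrightarrow> K *\<^sub>v v = 0\<^sub>v n \<Longrightarrow> v = 0\<^sub>v k"
  shows "rank K = k"
proof -
  have dist: "distinct (cols K)"
  proof (rule ccontr)
    assume "\<not> distinct (cols K)"
    then obtain a b where ab: "a \<noteq> b" "cols K ! a = cols K ! b" "a < length (cols K)" "b < length (cols K)"
      using distinct_conv_nth by blast
    then have abk: "a < k" "b < k" using K by auto
    have ceq: "col K a = col K b" using ab abk K by auto
    define v :: "'a vec" where "v = unit_vec k a - unit_vec k b"
    have v: "v \<in> carrier_vec k" unfolding v_def by simp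
    have "K *\<^sub>v v = K *\<^sub>v unit_vec k a - K *\<^sub>v unit_vec k b"
      unfolding v_def using K by (simp add: mult_minus_distrib_mat_vec)
    also have "\<dots> = 0\<^sub>v n" using mult_unit_vec_col[OF K abk(1)] mult_unit_vec_col[OF K abk(2)] ceq K
      by auto
    finally have "v = 0\<^sub>v k" using inj v by blast
    then have "v $ a = 0" using abk by simp
    moreover have "v $ a = 1" unfolding v_def using abk ab by simp
    ultimately show False by simp
  qed
  have "lin_indpt (set (cols K))"
  proof
    assume "lin_dep (set (cols K))"
    then obtain v :: "'a vec" where "v \<in> carrier_vec k" "v \<noteq> 0\<^sub>v k" "K *\<^sub>v v = 0\<^sub>v n"
      using lin_depE[OF K _ dist] by blast
    then show False using inj by blast
  qed
  then show ?thesis using lin_indpt_full_rank[OF K dist] by blast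
qed

end

lemma sig_sum:
  fixes Sig :: "real mat"
  assumes Sig: "Sig \<in> carrier_mat Ny M"
    and diag: "\<And>i j. i < Ny \<Longrightarrow> j < M \<Longrightarrow> i \<noteq> j \<Longrightarrow> Sig $$ (i,j) = 0"
    and l: "l < Ny"
  shows "(\<Sum>c<M. Sig $$ (l,c) * f c) = (if l < M then Sig $$ (l,l) * f l else 0)"
proof -
  have "(\<Sum>c<M. Sig $$ (l,c) * f c) = (\<Sum>c<M. if c = l then Sig $$ (l,l) * f l else 0)"
    using diag l by (intro sum.cong refl) auto
  also have "\<dots> = (if l < M then Sig $$ (l,l) * f l else 0)" by simp
  finally show ?thesis .
qed

lemma W_entry:
  fixes Sig V :: "real mat"
  assumes Sig: "Sig \<in> carrier_mat Ny M"
    and diag: "\<And>i j. i < Ny \<Longrightarrow> j < M \<Longrightarrow> i \<noteq> j \<Longrightarrow> Sig $$ (i,j) = 0"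
    and V: "V \<in> carrier_mat M M'" and k: "k < Ny" and a: "a < M'"
  shows "(Sig * V) $$ (k,a) = (if k < M then Sig $$ (k,k) * V $$ (k,a) else 0)"
proof -
  have "(Sig * V) $$ (k,a) = (\<Sum>c<M. Sig $$ (k,c) * V $$ (c,a))"
    using Sig V k a by (simp add: scalar_prod_def atLeast0LessThan)
  also have "\<dots> = (if k < M then Sig $$ (k,k) * V $$ (k,a) else 0)"
    by (rule sig_sum[OF Sig diag k])
  finally show ?thesis .
qed

lemma sigma_zero_above_rank:
  fixes U Sig V Yt :: "real mat"
  assumes U: "U \<in> carrier_mat Ny Ny" "transpose_mat U * U = 1\<^sub>m Ny"
    and V: "V \<in> carrier_mat M M" "V * transpose_mat V = 1\<^sub>m M"
    and Sig: "Sig \<in> carrier_mat Ny M"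
      "\<And>i j. i < Ny \<Longrightarrow> j < M \<Longrightarrow> i \<noteq> j \<Longrightarrow> Sig $$ (i,j) = 0"
      "\<And>i. i < min Ny M \<Longrightarrow> Sig $$ (i,i) \<ge> 0"
      "\<And>i j. i \<le> j \<Longrightarrow> j < min Ny M \<Longrightarrow> Sig $$ (j,j) \<le> Sig $$ (i,i)"
    and svd: "Yt = U * Sig * V"
    and j: "j < min Ny M" and nz: "Sig $$ (j,j) \<noteq> 0"
  shows "j < vec_space.rank Ny Yt"
proof -
  define Q :: "real mat" where "Q = mat M (Suc j) (\<lambda>(a,l). V $$ (l,a))"
  have Q: "Q \<in> carrier_mat M (Suc j)" unfolding Q_def by simp
  have jM: "Suc j \<le> M" "Suc j \<le> Ny" using j by auto
  have VQ: "(V * Q) $$ (c,m) = (if c = m then 1 else 0)" if "c < M" "m < Suc j" for c m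
  proof -
    have "(V * Q) $$ (c,m) = (V * transpose_mat V) $$ (c,m)"
      using that V(1) jM unfolding Q_def by (simp add: scalar_prod_def)
    also have "\<dots> = (if c = m then 1 else 0)" unfolding V(2) using that jM by simp
    finally show ?thesis .
  qed
  define D where "D = Sig * (V * Q)"
  have D: "D \<in> carrier_mat Ny (Suc j)" unfolding D_def using Sig V Q by simp
  have Dent: "D $$ (l,m) = (if l = m then Sig $$ (l,l) else 0)" if "l < Ny" "m < Suc j" for l m
  proof -
    have "D $$ (l,m) = (\<Sum>c<M. Sig $$ (l,c) * (V * Q) $$ (c,m))"
      unfolding D_def using that Sig V Q by (simp add: scalar_prod_def atLeast0LessThan)
    also have "\<dots> = (if l < M then Sig $$ (l,l) * (V * Q) $$ (l,m) else 0)"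
      by (rule sig_sum[OF Sig(1) Sig(2) that(1)])
    also have "\<dots> = (if l = m then Sig $$ (l,l) else 0)"
      using VQ that jM by auto
    finally show ?thesis .
  qed
  define K where "K = Yt * Q"
  have Yt: "Yt \<in> carrier_mat Ny M" using svd U Sig V by simp
  have K: "K \<in> carrier_mat Ny (Suc j)" unfolding K_def using Yt Q by simp
  have KUD: "K = U * D"
  proof -
    have SV: "Sig * V \<in> carrier_mat Ny M" using Sig V by simp
    have "K = U * (Sig * V) * Q" unfolding K_def svd using U Sig V by simp
    also have "\<dots> = U * ((Sig * V) * Q)" by (rule assoc_mult_mat[OF U(1) SV Q])
    also have "(Sig * V) * Q = Sig * (V * Q)" by (rule assoc_mult_mat[OF Sig(1) V(1) Q])
    finally show ?thesis unfolding D_def .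
  qed
  have "vec_space.rank Ny K = Suc j"
  proof (rule vec_space.full_col_rank[OF K])
    fix v assume v: "v \<in> carrier_vec (Suc j)" and Kv: "K *\<^sub>v v = 0\<^sub>v Ny"
    have Dv': "D *\<^sub>v v \<in> carrier_vec Ny" using D v by simp
    have Ut: "transpose_mat U \<in> carrier_mat Ny Ny" using U by simp
    have "D *\<^sub>v v = (transpose_mat U * U) *\<^sub>v (D *\<^sub>v v)" unfolding U(2) using Dv' by simp
    also have "\<dots> = transpose_mat U *\<^sub>v (U *\<^sub>v (D *\<^sub>v v))" by (rule assoc_mult_mat_vec[OF Ut U(1) Dv'])
    also have "U *\<^sub>v (D *\<^sub>v v) = K *\<^sub>v v" unfolding KUD by (rule assoc_mult_mat_vec[OF U(1) D v, symmetric])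
    also have "\<dots> = 0\<^sub>v Ny" unfolding Kv using U by simp
    finally have Dv: "D *\<^sub>v v = 0\<^sub>v Ny" using U by (auto intro!: eq_vecI simp: scalar_prod_def)
    show "v = 0\<^sub>v (Suc j)"
    proof (rule eq_vecI)
      fix l assume "l < dim_vec (0\<^sub>v (Suc j))"
      then have l: "l < Suc j" by simp
      have lNy: "l < Ny" using l jM by simp
      have "(D *\<^sub>v v) $ l = (\<Sum>m<Suc j. D $$ (l,m) * v $ m)"
        using D v lNy by (simp add: scalar_prod_def atLeast0LessThan)
      also have "\<dots> = (\<Sum>m<Suc j. if m = l then Sig $$ (l,l) * v $ l else 0)"
        using Dent lNy by (intro sum.cong refl) auto
      also have "\<dots> = Sig $$ (l,l) * v $ l" using l by simp
      finally have "Sig $$ (l,l) * v $ l = 0" using Dv lNy by simp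
      moreover have "Sig $$ (l,l) \<noteq> 0"
      proof -
        have "Sig $$ (j,j) \<le> Sig $$ (l,l)" using Sig(4)[of l j] l j by simp
        moreover have "Sig $$ (j,j) > 0" using Sig(3)[OF j] nz by simp
        ultimately show ?thesis by simp
      qed
      ultimately show "v $ l = 0\<^sub>v (Suc j) $ l" using l by simp
    qed (use v in simp)
  qed
  moreover have "vec_space.rank Ny K \<le> vec_space.rank Ny Yt"
    unfolding K_def by (rule vec_space.rank_mult_right[OF Yt Q])
  ultimately show ?thesis by simp
qed

lemma pick_interval: "i < r \<Longrightarrow> pick {0..<r} i = i"
proof -
  assume i: "i < r"
  have "card {a \<in> {0..<r}. a < i} = i"
  proof -
    have "{a \<in> {0..<r}. a < i} = {0..<i}" using i by auto
    then show ?thesis by simp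
  qed
  then show ?thesis using pick_card_in_set[of i "{0..<r}"] i by simp
qed

lemma card_interval_filter: "r \<le> n \<Longrightarrow> card {i. i < n \<and> i \<in> {0..<r}} = r"
proof -
  assume "r \<le> n"
  then have "{i. i < n \<and> i \<in> {0..<r}} = {0..<r}" by auto
  then show ?thesis by simp
qed

lemma Z_entry:
  fixes Sig V :: "real mat"
  assumes Sig: "Sig \<in> carrier_mat Ny M"
    and diag: "\<And>i j. i < Ny \<Longrightarrow> j < M \<Longrightarrow> i \<noteq> j \<Longrightarrow> Sig $$ (i,j) = 0"
    and V: "V \<in> carrier_mat M M" and rNy: "r \<le> Ny" and rM: "r \<le> M"
  shows "submatrix Sig {0..<r} {0..<r} * submatrix V {0..<r} {0..<M} \<in> carrier_mat r M"
    and "\<And>k a. k < r \<Longrightarrow> a < M \<Longrightarrow>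
      (submatrix Sig {0..<r} {0..<r} * submatrix V {0..<r} {0..<M}) $$ (k,a) = Sig $$ (k,k) * V $$ (k,a)"
proof -
  have d1: "card {i. i < dim_row Sig \<and> i \<in> {0..<r}} = r" using Sig rNy card_interval_filter by simp
  have d2: "card {i. i < dim_col Sig \<and> i \<in> {0..<r}} = r" using Sig rM card_interval_filter by simp
  have d3: "card {i. i < dim_row V \<and> i \<in> {0..<r}} = r" using V rM card_interval_filter by simp
  have d4: "card {i. i < dim_col V \<and> i \<in> {0..<M}} = M" using V card_interval_filter by simp
  have Sr: "submatrix Sig {0..<r} {0..<r} \<in> carrier_mat r r"
    by (rule carrier_matI) (simp_all only: dim_submatrix d1 d2)
  have Vr: "submatrix V {0..<r} {0..<M} \<in> carrier_mat r M"
    by (rule carrier_matI) (simp_all only: dim_submatrix d3 d4)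
  show "submatrix Sig {0..<r} {0..<r} * submatrix V {0..<r} {0..<M} \<in> carrier_mat r M"
    using Sr Vr by simp
  fix k a assume k: "k < r" and a: "a < M"
  have "(submatrix Sig {0..<r} {0..<r} * submatrix V {0..<r} {0..<M}) $$ (k,a)
      = (\<Sum>l<r. submatrix Sig {0..<r} {0..<r} $$ (k,l) * submatrix V {0..<r} {0..<M} $$ (l,a))"
    using Sr Vr k a by (simp add: scalar_prod_def atLeast0LessThan)
  also have "\<dots> = (\<Sum>l<r. Sig $$ (k,l) * V $$ (l,a))"
    using d1 d2 d3 d4 k a by (intro sum.cong refl) (simp add: submatrix_index pick_interval)
  also have "\<dots> = (\<Sum>l<r. if l = k then Sig $$ (k,k) * V $$ (k,a) else 0)"
    using diag k rNy rM by (intro sum.cong refl) auto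
  also have "\<dots> = Sig $$ (k,k) * V $$ (k,a)" using k by simp
  finally show "(submatrix Sig {0..<r} {0..<r} * submatrix V {0..<r} {0..<M}) $$ (k,a) = Sig $$ (k,k) * V $$ (k,a)" .
qed

lemma gram_from_entries:
  fixes Z :: "real mat"
  assumes Z: "Z \<in> carrier_mat n M" and a: "a < M" and b: "b < M"
  shows "(transpose_mat Z * Z) $$ (a,b) = (\<Sum>k<n. Z $$ (k,a) * Z $$ (k,b))"
  using Z a b by (simp add: scalar_prod_def atLeast0LessThan)

lemma jsum:
  fixes B V :: "real mat"
  assumes "finite Ks"
  shows "(\<Sum>a<M. \<Sum>b<M. B $$ (a,b) * (\<Sum>k\<in>Ks. c k * (V $$ (k,a) * V $$ (k,b))))
       = (\<Sum>k\<in>Ks. c k * (\<Sum>a<M. \<Sum>b<M. B $$ (a,b) * (V $$ (k,a) * V $$ (k,b))))"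
proof -
  have "(\<Sum>a<M. \<Sum>b<M. B $$ (a,b) * (\<Sum>k\<in>Ks. c k * (V $$ (k,a) * V $$ (k,b))))
      = (\<Sum>a<M. \<Sum>b<M. \<Sum>k\<in>Ks. c k * (B $$ (a,b) * (V $$ (k,a) * V $$ (k,b))))"
    by (simp add: sum_distrib_left mult_ac)
  also have "\<dots> = (\<Sum>a<M. \<Sum>k\<in>Ks. \<Sum>b<M. c k * (B $$ (a,b) * (V $$ (k,a) * V $$ (k,b))))"
    by (rule sum.cong[OF refl], rule sum.swap)
  also have "\<dots> = (\<Sum>k\<in>Ks. \<Sum>a<M. \<Sum>b<M. c k * (B $$ (a,b) * (V $$ (k,a) * V $$ (k,b))))"
    by (rule sum.swap)
  also have "\<dots> = (\<Sum>k\<in>Ks. c k * (\<Sum>a<M. \<Sum>b<M. B $$ (a,b) * (V $$ (k,a) * V $$ (k,b))))"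
    by (simp add: sum_distrib_left)
  finally show ?thesis .
qed

lemma gram_inverse:
  fixes X :: "real mat"
  assumes X: "X \<in> carrier_mat N M" and T: "T \<subseteq> {0..<N}"
    and pd: "pos_def_mat (card T) (gram_reg X lam T)"
  obtains Gi where "mat_inverse (gram_reg X lam T) = Some Gi"
    "gram_reg X lam T * Gi = 1\<^sub>m (card T)" "Gi \<in> carrier_mat (card T) (card T)"
proof -
  let ?G = "gram_reg X lam T"
  have Gc: "?G \<in> carrier_mat (card T) (card T)" using pd unfolding pos_def_mat_def by simp
  have "det ?G \<noteq> 0"
  proof
    assume "det ?G = 0"
    then obtain v where v: "v \<in> carrier_vec (card T)" "v \<noteq> 0\<^sub>v (card T)" "?G *\<^sub>v v = 0\<^sub>v (card T)"
      using det_0_iff_vec_prod_zero_field[OF Gc] by blast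
    then have "v \<bullet> (?G *\<^sub>v v) > 0" using pd unfolding pos_def_mat_def by blast
    then show False using v by simp
  qed
  then have "?G \<in> Units (ring_mat TYPE(real) (card T) ())" by (rule det_non_zero_imp_unit[OF Gc])
  then have "mat_inverse ?G \<noteq> None" using mat_inverse(1)[OF Gc, where b="()"] by blast
  then obtain Gi where Gi: "mat_inverse ?G = Some Gi" by blast
  then show ?thesis using mat_inverse(2)[OF Gc Gi] that by blast
qed

lemma rows_sub_carrier:
  assumes X: "X \<in> carrier_mat N M" and T: "T \<subseteq> {0..<N}"
  shows "rows_sub X T \<in> carrier_mat (card T) M"
proof -
  have e1: "{i. i < dim_row X \<and> i \<in> T} = T" using X T by auto
  have e2: "{j. j < dim_col X \<and> j \<in> {0..<dim_col X}} = {0..<M}" using X by auto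
  show ?thesis unfolding rows_sub_def
    by (rule carrier_matI) (simp_all only: dim_submatrix e1 e2 card_atLeastLessThan diff_zero)
qed

lemma Jfun_trace:
  fixes X Y Gi :: "real mat"
  assumes X: "X \<in> carrier_mat N M" and T: "T \<subseteq> {0..<N}" "T \<noteq> {}"
    and Gi: "mat_inverse (gram_reg X lam T) = Some Gi" "Gi \<in> carrier_mat (card T) (card T)"
    and Y: "Y \<in> carrier_mat n M"
  shows "Jfun X lam Y T = mtrace (Y * (transpose_mat (rows_sub X T) * Gi * rows_sub X T) * transpose_mat Y)"
proof -
  let ?A = "rows_sub X T"
  have A: "?A \<in> carrier_mat (card T) M" by (rule rows_sub_carrier[OF X T(1)])
  have At: "transpose_mat ?A \<in> carrier_mat M (card T)" using A by simp
  have "Y * transpose_mat ?A * Gi = Y * (transpose_mat ?A * Gi)"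
    by (rule assoc_mult_mat[OF Y At Gi(2)])
  moreover have "Y * (transpose_mat ?A * Gi) * ?A = Y * (transpose_mat ?A * Gi * ?A)"
    by (rule assoc_mult_mat[OF Y _ A]) (use At Gi(2) in simp)
  ultimately have "Y * transpose_mat ?A * Gi * ?A = Y * (transpose_mat ?A * Gi * ?A)" by simp
  then show ?thesis unfolding Jfun_def using T(2) Gi(1) by simp
qed

lemma J_diff_bounds:
  fixes X Yt U Sig V :: "real mat" and lam :: real
  assumes X: "X \<in> carrier_mat N M" and lam: "lam \<ge> 0"
    and U: "U \<in> carrier_mat Ny Ny" "transpose_mat U * U = 1\<^sub>m Ny"
    and V: "V \<in> carrier_mat M M" "V * transpose_mat V = 1\<^sub>m M"
    and Sig: "Sig \<in> carrier_mat Ny M"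
      "\<And>i j. i < Ny \<Longrightarrow> j < M \<Longrightarrow> i \<noteq> j \<Longrightarrow> Sig $$ (i,j) = 0"
      "\<And>i. i < min Ny M \<Longrightarrow> Sig $$ (i,i) \<ge> 0"
      "\<And>i j. i \<le> j \<Longrightarrow> j < min Ny M \<Longrightarrow> Sig $$ (j,j) \<le> Sig $$ (i,i)"
    and svd: "Yt = U * Sig * V"
    and r: "r \<le> vec_space.rank Ny Yt"
    and T: "T \<subseteq> {0..<N}" "T \<noteq> {}" and pd: "pos_def_mat (card T) (gram_reg X lam T)"
  shows "0 \<le> Jfun X lam Yt T - Jfun X lam (submatrix Sig {0..<r} {0..<r} * submatrix V {0..<r} {0..<M}) T
     \<and> Jfun X lam Yt T - Jfun X lam (submatrix Sig {0..<r} {0..<r} * submatrix V {0..<r} {0..<M}) T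
       \<le> (\<Sum>i\<in>{r..<vec_space.rank Ny Yt}. (Sig $$ (i,i))^2)"
proof -
  define Z where "Z = submatrix Sig {0..<r} {0..<r} * submatrix V {0..<r} {0..<M}"
  define rk where "rk = vec_space.rank Ny Yt"
  define s where "s = (\<lambda>k. Sig $$ (k,k))"
  have Yt: "Yt \<in> carrier_mat Ny M" using svd U Sig V by simp
  have rkNy: "rk \<le> Ny" unfolding rk_def by (rule vec_space.rank_le_nr[OF Yt])
  have rkM: "rk \<le> M" unfolding rk_def by (rule vec_space.rank_le_nc[OF Yt])
  have rNy: "r \<le> Ny" and rM: "r \<le> M" using r rkNy rkM unfolding rk_def by auto
  have Z: "Z \<in> carrier_mat r M" unfolding Z_def by (rule Z_entry(1)[OF Sig(1) Sig(2) V(1) rNy rM])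
  have Zent: "Z $$ (k,a) = s k * V $$ (k,a)" if "k < r" "a < M" for k a
    unfolding Z_def s_def by (rule Z_entry(2)[OF Sig(1) Sig(2) V(1) rNy rM that])
  obtain Gi where Gi: "mat_inverse (gram_reg X lam T) = Some Gi"
    "gram_reg X lam T * Gi = 1\<^sub>m (card T)" "Gi \<in> carrier_mat (card T) (card T)"
    using gram_inverse[OF X T(1) pd] by blast
  define A where "A = rows_sub X T"
  have A: "A \<in> carrier_mat (card T) M" unfolding A_def by (rule rows_sub_carrier[OF X T(1)])
  define B where "B = transpose_mat A * Gi * A"
  have B: "B \<in> carrier_mat M M" unfolding B_def using A Gi(3) by simp
  define q where "q = (\<lambda>k. \<Sum>a<M. \<Sum>b<M. B $$ (a,b) * (V $$ (k,a) * V $$ (k,b)))"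
  have q: "0 \<le> q k \<and> q k \<le> 1" if k: "k < M" for k
  proof -
    have rv: "row V k \<in> carrier_vec M" using row_carrier[of V k] V(1) by simp
    have "q k = row V k \<bullet> (B *\<^sub>v row V k)" unfolding q_def
      using quad_sum[OF rv B] V k by simp
    moreover have "row V k \<bullet> row V k = 1"
    proof -
      have "(V * transpose_mat V) $$ (k,k) = row V k \<bullet> row V k" using V(1) k by simp
      then show ?thesis unfolding V(2) using k by simp
    qed
    moreover have "(A * transpose_mat A + lam \<cdot>\<^sub>m 1\<^sub>m (card T)) * Gi = 1\<^sub>m (card T)"
      using Gi(2) unfolding gram_reg_def A_def .
    ultimately show ?thesis using quad_bounds[OF A lam Gi(3) _ rv] unfolding B_def by simp
  qed
  have JY: "Jfun X lam Y T = (\<Sum>a<M. \<Sum>b<M. B $$ (a,b) * (transpose_mat Y * Y) $$ (a,b))"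
    if "Y \<in> carrier_mat n M" for Y n
    unfolding Jfun_trace[OF X T Gi(1) Gi(3) that] trace_form[OF that B[unfolded B_def A_def]] B_def A_def ..
  define W where "W = Sig * V"
  have W: "W \<in> carrier_mat Ny M" unfolding W_def using Sig V by simp
  have YtW: "transpose_mat Yt * Yt = transpose_mat W * W"
  proof -
    have Yt': "Yt = U * W" unfolding svd W_def by (rule assoc_mult_mat[OF U(1) Sig(1) V(1)])
    have "transpose_mat Yt * Yt = (transpose_mat W * transpose_mat U) * (U * W)"
      unfolding Yt' using transpose_mult[OF U(1) W] by simp
    also have "\<dots> = transpose_mat W * (transpose_mat U * (U * W))"
      by (rule assoc_mult_mat[of _ M Ny _ Ny]) (use W U in auto)
    also have "transpose_mat U * (U * W) = (transpose_mat U * U) * W"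
      by (rule assoc_mult_mat[of _ Ny Ny _ Ny, symmetric]) (use W U in auto)
    also have "\<dots> = W" unfolding U(2) using W by simp
    finally show ?thesis .
  qed
  have YtG: "(transpose_mat Yt * Yt) $$ (a,b) = (\<Sum>k\<in>{..<min Ny M}. (s k)^2 * (V $$ (k,a) * V $$ (k,b)))"
    if "a < M" "b < M" for a b
  proof -
    have "(transpose_mat Yt * Yt) $$ (a,b) = (\<Sum>k<Ny. W $$ (k,a) * W $$ (k,b))"
      unfolding YtW by (rule gram_from_entries[OF W that])
    also have "\<dots> = (\<Sum>k<Ny. if k < M then (s k)^2 * (V $$ (k,a) * V $$ (k,b)) else 0)"
      using W_entry[OF Sig(1) Sig(2) V(1)] that unfolding W_def s_def
      by (intro sum.cong refl) (auto simp: power2_eq_square)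
    also have "\<dots> = (\<Sum>k\<in>{k \<in> {..<Ny}. k < M}. (s k)^2 * (V $$ (k,a) * V $$ (k,b)))"
      by (rule sum.inter_filter[symmetric]) simp
    also have "{k \<in> {..<Ny}. k < M} = {..<min Ny M}" by auto
    finally show ?thesis .
  qed
  have ZG: "(transpose_mat Z * Z) $$ (a,b) = (\<Sum>k\<in>{..<r}. (s k)^2 * (V $$ (k,a) * V $$ (k,b)))"
    if "a < M" "b < M" for a b
  proof -
    have "(transpose_mat Z * Z) $$ (a,b) = (\<Sum>k<r. Z $$ (k,a) * Z $$ (k,b))"
      by (rule gram_from_entries[OF Z that])
    also have "\<dots> = (\<Sum>k\<in>{..<r}. (s k)^2 * (V $$ (k,a) * V $$ (k,b)))"
      using Zent that by (intro sum.cong refl) (auto simp: power2_eq_square)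
    finally show ?thesis .
  qed
  have J1: "Jfun X lam Yt T = (\<Sum>k\<in>{..<min Ny M}. (s k)^2 * q k)"
  proof -
    have "Jfun X lam Yt T = (\<Sum>a<M. \<Sum>b<M. B $$ (a,b) * (\<Sum>k\<in>{..<min Ny M}. (s k)^2 * (V $$ (k,a) * V $$ (k,b))))"
      unfolding JY[OF Yt] using YtG by (intro sum.cong refl) auto
    also have "\<dots> = (\<Sum>k\<in>{..<min Ny M}. (s k)^2 * q k)" unfolding q_def by (rule jsum) simp
    finally show ?thesis .
  qed
  have J2: "Jfun X lam Z T = (\<Sum>k\<in>{..<r}. (s k)^2 * q k)"
  proof -
    have "Jfun X lam Z T = (\<Sum>a<M. \<Sum>b<M. B $$ (a,b) * (\<Sum>k\<in>{..<r}. (s k)^2 * (V $$ (k,a) * V $$ (k,b))))"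
      unfolding JY[OF Z] using ZG by (intro sum.cong refl) auto
    also have "\<dots> = (\<Sum>k\<in>{..<r}. (s k)^2 * q k)" unfolding q_def by (rule jsum) simp
    finally show ?thesis .
  qed
  have rkmin: "r \<le> rk" "rk \<le> min Ny M" using r rkNy rkM unfolding rk_def by auto
  have diff: "Jfun X lam Yt T - Jfun X lam Z T = (\<Sum>k\<in>{r..<rk}. (s k)^2 * q k)"
  proof -
    let ?f = "\<lambda>k. (s k)^2 * q k"
    have "sum ?f {..<min Ny M} = sum ?f {0..<r} + sum ?f {r..<rk} + sum ?f {rk..<min Ny M}"
      using rkmin by (simp add: atLeast0LessThan[symmetric] sum.atLeastLessThan_concat)
    moreover have "sum ?f {rk..<min Ny M} = 0"
    proof (rule sum.neutral, rule ballI)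
      fix k assume k: "k \<in> {rk..<min Ny M}"
      have "s k = 0"
      proof (rule ccontr)
        assume "s k \<noteq> 0"
        then have "k < rk" unfolding rk_def s_def
          using sigma_zero_above_rank[OF U V(1) V(2) Sig svd] k by auto
        then show False using k by simp
      qed
      then show "?f k = 0" by simp
    qed
    ultimately show ?thesis unfolding J1 J2 by (simp add: atLeast0LessThan)
  qed
  have "0 \<le> (\<Sum>k\<in>{r..<rk}. (s k)^2 * q k)"
    using q rkmin by (intro sum_nonneg) auto
  moreover have "(\<Sum>k\<in>{r..<rk}. (s k)^2 * q k) \<le> (\<Sum>k\<in>{r..<rk}. (s k)^2)"
  proof (rule sum_mono)
    fix k assume "k \<in> {r..<rk}"
    then have "0 \<le> q k" "q k \<le> 1" using q rkmin by auto
    then show "(s k)^2 * q k \<le> (s k)^2" by (simp add: mult_left_le)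
  qed
  ultimately show ?thesis using diff unfolding Z_def rk_def s_def by simp
qed

theorem theorem3:
  fixes N Ny M p r k' :: nat and X Yt U Sig V :: "real mat" and lam :: real
    and sr sr2 so :: "nat \<Rightarrow> nat" and Sr So :: "nat \<Rightarrow> nat set"
  assumes "p \<le> N"
    and X: "X \<in> carrier_mat N M"
    and Yt: "Yt \<in> carrier_mat Ny M"
    and lam: "lam \<ge> 0"
    (* singular value decomposition Yt = U Sig V *)
    and U: "U \<in> carrier_mat Ny Ny" "transpose_mat U * U = 1\<^sub>m Ny" "U * transpose_mat U = 1\<^sub>m Ny"
    and V: "V \<in> carrier_mat M M" "transpose_mat V * V = 1\<^sub>m M" "V * transpose_mat V = 1\<^sub>m M"
    and Sig: "Sig \<in> carrier_mat Ny M"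
      "\<And>i j. i < Ny \<Longrightarrow> j < M \<Longrightarrow> i \<noteq> j \<Longrightarrow> Sig $$ (i,j) = 0"
      "\<And>i. i < min Ny M \<Longrightarrow> Sig $$ (i,i) \<ge> 0"
      "\<And>i j. i \<le> j \<Longrightarrow> j < min Ny M \<Longrightarrow> Sig $$ (j,j) \<le> Sig $$ (i,i)"
    and svd: "Yt = U * Sig * V"
    and r: "r \<le> vec_space.rank Ny Yt"
    (* greedy sequence for Z = Sig_{1:r,1:r} V_{1:r} *)
    and Sr0: "Sr 0 = {}"
    and sr: "\<And>k. 1 \<le> k \<Longrightarrow> k \<le> p \<Longrightarrow>
       is_argmax_gain X lam (submatrix Sig {0..<r} {0..<r} * submatrix V {0..<r} {0..<M})
         (Sr (k-1)) (feasible X lam (Sr (k-1))) (sr k)"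
    and Srk: "\<And>k. 1 \<le> k \<Longrightarrow> k \<le> p \<Longrightarrow> Sr k = insert (sr k) (Sr (k-1))"
    (* greedy sequence for Yt *)
    and So0: "So 0 = {}"
    and so: "\<And>k. 1 \<le> k \<Longrightarrow> k \<le> p \<Longrightarrow>
       is_argmax_gain X lam Yt (So (k-1)) (feasible X lam (So (k-1))) (so k)"
    and Sok: "\<And>k. 1 \<le> k \<Longrightarrow> k \<le> p \<Longrightarrow> So k = insert (so k) (So (k-1))"
    and k': "1 \<le> k'" "k' \<le> p"
    (* second-best elements *)
    and sr2: "\<And>k. 1 \<le> k \<Longrightarrow> k \<le> k' \<Longrightarrow>
       is_argmax_gain X lam (submatrix Sig {0..<r} {0..<r} * submatrix V {0..<r} {0..<M})
         (Sr (k-1)) (feasible X lam (Sr (k-1)) - {sr k}) (sr2 k)"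
    and gap: "\<And>k. 1 \<le> k \<Longrightarrow> k \<le> k' \<Longrightarrow>
       Jfun X lam (submatrix Sig {0..<r} {0..<r} * submatrix V {0..<r} {0..<M}) (Sr k)
       - Jfun X lam (submatrix Sig {0..<r} {0..<r} * submatrix V {0..<r} {0..<M}) (insert (sr2 k) (Sr (k-1)))
       > (\<Sum>i\<in>{r..<vec_space.rank Ny Yt}. (Sig $$ (i,i))^2)"
  shows "Sr k' = So k'"
proof -
  define Z where "Z = submatrix Sig {0..<r} {0..<r} * submatrix V {0..<r} {0..<M}"
  define tail where "tail = (\<Sum>i\<in>{r..<vec_space.rank Ny Yt}. (Sig $$ (i,i))^2)"
  have dX: "dim_row X = N" using X by simp
  have bounds: "0 \<le> Jfun X lam Yt (insert i S) - Jfun X lam Z (insert i S)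
      \<and> Jfun X lam Yt (insert i S) - Jfun X lam Z (insert i S) \<le> tail"
    if S: "S \<subseteq> {0..<N}" and i: "i \<in> feasible X lam S" for S i
  proof -
    have iN: "i \<in> {0..<N}" and pd: "pos_def_mat (card (insert i S)) (gram_reg X lam (insert i S))"
      using i dX unfolding feasible_def by auto
    have T: "insert i S \<subseteq> {0..<N}" "insert i S \<noteq> {}" using S iN by auto
    show ?thesis unfolding Z_def tail_def
      by (rule J_diff_bounds[OF X lam U(1) U(2) V(1) V(3) Sig svd r T pd])
  qed
  have main: "k \<le> k' \<Longrightarrow> Sr k = So k \<and> Sr k \<subseteq> {0..<N}" for k
  proof (induction k)
    case 0
    then show ?case using Sr0 So0 by simp
  next
    case (Suc m)
    then have IH: "Sr m = So m" "Sr m \<subseteq> {0..<N}" by auto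
    have m1: "1 \<le> Suc m" "Suc m \<le> p" "Suc m \<le> k'" using Suc.prems k' by auto
    define S where "S = Sr m"
    define F where "F = feasible X lam S"
    define a where "a = sr (Suc m)"
    define b where "b = so (Suc m)"
    define c where "c = sr2 (Suc m)"
    have ha: "is_argmax_gain X lam Z S F a" using sr[OF m1(1,2)] unfolding Z_def S_def F_def a_def by simp
    have hb: "is_argmax_gain X lam Yt S F b" using so[OF m1(1,2)] IH(1) unfolding S_def F_def b_def by simp
    have hc: "is_argmax_gain X lam Z S (F - {a}) c" using sr2[OF m1(1,3)] unfolding Z_def S_def F_def a_def c_def by simp
    have hgap: "Jfun X lam Z (insert a S) - Jfun X lam Z (insert c S) > tail"
      using gap[OF m1(1,3)] Srk[OF m1(1,2)] unfolding Z_def tail_def S_def a_def c_def by simp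
    have aF: "a \<in> F" and bF: "b \<in> F" and cF: "c \<in> F" using ha hb hc unfolding is_argmax_gain_def by auto
    have SN: "S \<subseteq> {0..<N}" using IH(2) unfolding S_def .
    have ab: "b = a"
    proof (rule ccontr)
      assume "b \<noteq> a"
      then have "b \<in> F - {a}" using bF by simp
      then have 1: "Jfun X lam Z (insert b S) \<le> Jfun X lam Z (insert c S)"
        using hc unfolding is_argmax_gain_def by fastforce
      have 2: "Jfun X lam Yt (insert a S) \<le> Jfun X lam Yt (insert b S)"
        using hb aF unfolding is_argmax_gain_def by fastforce
      have 3: "0 \<le> Jfun X lam Yt (insert a S) - Jfun X lam Z (insert a S)"
        using bounds[OF SN aF[unfolded F_def]] by simp
      have 4: "Jfun X lam Yt (insert b S) - Jfun X lam Z (insert b S) \<le> tail"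
        using bounds[OF SN bF[unfolded F_def]] by simp
      show False using 1 2 3 4 hgap by linarith
    qed
    have "Sr (Suc m) = insert a S" using Srk[OF m1(1,2)] unfolding a_def S_def by simp
    moreover have "So (Suc m) = insert b S" using Sok[OF m1(1,2)] IH(1) unfolding b_def S_def by simp
    moreover have "a \<in> {0..<N}" using aF dX unfolding F_def feasible_def by auto
    ultimately show ?case using ab SN by auto
  qed
  show ?thesis using main[of k'] by simp
qed

end
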